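(* Let $P$ be the uniform distribution on $[0,1]$ and $\beta=\{\frac14,\frac12\}$. The conditional optimal set of five-points for $P$ with respect to $\beta$ is $\alpha_5=\{\frac1{12},\frac14,\frac12,\frac7{10},\frac9{10}\}$, with $V_5=\frac{613}{172800}$ ($\approx0.00354745$).
   Context: For a Borel probability measure $P$ on $\mathbb{R}$ and finite $\beta$ with $\mathrm{card}(\beta)=r$, for $n\ge r$, $V_n=\inf\{\int\min_{a\in\alpha\cup\beta}(x-a)^2dP(x):\mathrm{card}(\alpha)\le n-r\}$; a set $\alpha\cup\beta$ attaining the infimum, with each point of $\beta$ having a Voronoi region of positive $P$-measure, is a conditional optimal set of $n$-points with respect to $\beta$. *)

theory Defs
  imports "HOL-Probability.Probability"
begin

definition unif01 :: "real measure" where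
  "unif01 = uniform_measure lborel {0..1}"

definition distortion :: "real measure \<Rightarrow> real set \<Rightarrow> real" where
  "distortion P A = (\<integral>x. Min ((\<lambda>a. (x - a)^2) ` A) \<partial>P)"

text \<open>Conditional quantization error V_n with respect to beta (requires card beta \<le> n).\<close>
definition cond_V :: "real measure \<Rightarrow> real set \<Rightarrow> nat \<Rightarrow> real" where
  "cond_V P \<beta> n = (INF \<alpha> \<in> {\<alpha>. finite \<alpha> \<and> card \<alpha> \<le> n - card \<beta>}. distortion P (\<alpha> \<union> \<beta>))"

definition voronoi :: "real set \<Rightarrow> real \<Rightarrow> real set" where
  "voronoi S a = {x. \<forall>b\<in>S. \<bar>x - a\<bar> \<le> \<bar>x - b\<bar>}"

definition is_cond_optimal :: "real measure \<Rightarrow> real set \<Rightarrow> nat \<Rightarrow> real set \<Rightarrow> bool" where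
  "is_cond_optimal P \<beta> n S \<longleftrightarrow>
     finite \<beta> \<and> card \<beta> \<le> n \<and>
     (\<exists>\<alpha>. finite \<alpha> \<and> card \<alpha> \<le> n - card \<beta> \<and> S = \<alpha> \<union> \<beta>) \<and>
     distortion P S = cond_V P \<beta> n \<and>
     (\<forall>b\<in>\<beta>. measure P (voronoi S b) > 0)"

end

theory Submission imports Defs begin

definition fS :: "real set \<Rightarrow> real \<Rightarrow> real" where
  "fS S x = Min ((\<lambda>a. (x - a)^2) ` S)"

lemma cont_fS: "finite S \<Longrightarrow> S \<noteq> {} \<Longrightarrow> continuous_on UNIV (fS S)"
proof (induction S rule: finite_ne_induct)
  case (singleton x)
  then show ?case by (simp add: fS_def continuous_intros)
next
  case (insert x F)
  have "fS (insert x F) = (\<lambda>y. min ((y-x)^2) (fS F y))"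
    apply (rule ext) using insert by (simp add: fS_def)
  then show ?case using insert by (auto intro!: continuous_intros)
qed

lemma dist_hk:
  fixes f :: "real \<Rightarrow> real"
  assumes "continuous_on UNIV f"
  shows "integral\<^sup>L unif01 f = integral {0..1} f"
proof -
  have eq: "unif01 = density lborel (\<lambda>x. ennreal (indicator {0..1::real} x))"
    unfolding unif01_def uniform_measure_def
    by (auto intro!: arg_cong[where f="density lborel"] simp: indicator_def)
  have "integral\<^sup>L unif01 f = integral\<^sup>L lborel (\<lambda>x. indicator {0..1::real} x *\<^sub>R f x)"
    unfolding eq
    apply (rule integral_density)
    using assms by (auto simp: borel_measurable_continuous_onI)
  also have "\<dots> = (LINT x : {0..1} | lborel. f x)"
    by (simp add: set_lebesgue_integral_def)
  also have "\<dots> = integral {0..1} f"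
    apply (rule set_borel_integral_eq_integral(2))
    apply (rule borel_integrable_atLeastAtMost')
    using assms continuous_on_subset by blast
  finally show ?thesis .
qed

lemma int_sq:
  fixes s t m :: real
  assumes "s \<le> t"
  shows "((\<lambda>x. (x-m)^2) has_integral ((t-m)^3 - (s-m)^3)/3) {s..t}"
proof -
  have "((\<lambda>x. (x-m)^2) has_integral ((\<lambda>x. (x-m)^3/3) t - (\<lambda>x. (x-m)^3/3) s)) {s..t}"
    apply (rule fundamental_theorem_of_calculus[OF assms])
    apply (auto intro!: derivative_eq_intros simp: has_real_derivative_iff_has_vector_derivative[symmetric])
    done
  then show ?thesis by (simp add: diff_divide_distrib)
qed

lemma sq_le1:
  fixes a b x :: real
  assumes "a \<le> b" "x \<le> (a+b)/2"
  shows "(x-a)^2 \<le> (x-b)^2"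
proof -
  have "(x-b)^2 - (x-a)^2 = (b-a)*(a+b-2*x)" by (simp add: power2_eq_square algebra_simps)
  moreover have "(b-a)*(a+b-2*x) \<ge> 0" using assms by (intro mult_nonneg_nonneg) auto
  ultimately show ?thesis by linarith
qed

lemma sq_le2:
  fixes a b x :: real
  assumes "a \<le> b" "(a+b)/2 \<le> x"
  shows "(x-b)^2 \<le> (x-a)^2"
proof -
  have "(x-a)^2 - (x-b)^2 = (b-a)*(2*x-a-b)" by (simp add: power2_eq_square algebra_simps)
  moreover have "(b-a)*(2*x-a-b) \<ge> 0" using assms by (intro mult_nonneg_nonneg) auto
  ultimately show ?thesis by linarith
qed

lemma piece:
  fixes s t m :: real
  assumes "s \<le> t" "\<And>x. x \<in> {s..t} \<Longrightarrow> f x = (x-m)^2"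
  shows "(f has_integral ((t-m)^3 - (s-m)^3)/3) {s..t}"
  by (rule has_integral_eq[OF _ int_sq[OF assms(1)]]) (use assms(2) in auto)

lemma two_pt:
  fixes a b s t :: real
  assumes "a \<le> b" "s \<le> (a+b)/2" "(a+b)/2 \<le> t"
  shows "((\<lambda>x. min ((x-a)^2) ((x-b)^2)) has_integral
     ((((a+b)/2-a)^3 - (s-a)^3)/3 + ((t-b)^3 - ((a+b)/2-b)^3)/3)) {s..t}"
proof (rule has_integral_combine[OF assms(2,3)])
  show "((\<lambda>x. min ((x-a)^2) ((x-b)^2)) has_integral (((a+b)/2-a)^3 - (s-a)^3)/3) {s..(a+b)/2}"
  proof (rule piece)
    show "s \<le> (a+b)/2" by fact
    fix x assume "x \<in> {s..(a+b)/2}"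
    then have "(x-a)^2 \<le> (x-b)^2" using sq_le1[OF assms(1)] by auto
    then show "min ((x-a)^2) ((x-b)^2) = (x-a)^2" by auto
  qed
  show "((\<lambda>x. min ((x-a)^2) ((x-b)^2)) has_integral ((t-b)^3 - ((a+b)/2-b)^3)/3) {(a+b)/2..t}"
  proof (rule piece)
    show "(a+b)/2 \<le> t" by fact
    fix x assume "x \<in> {(a+b)/2..t}"
    then have "(x-b)^2 \<le> (x-a)^2" using sq_le2[OF assms(1)] by auto
    then show "min ((x-a)^2) ((x-b)^2) = (x-b)^2" by auto
  qed
qed

lemma three_pt:
  fixes a b d s t :: real
  assumes "a \<le> b" "b \<le> d" "s \<le> (a+b)/2" "(b+d)/2 \<le> t"
  shows "((\<lambda>x. min ((x-a)^2) (min ((x-b)^2) ((x-d)^2))) has_integral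
     ((((a+b)/2-a)^3 - (s-a)^3)/3 + (((b+d)/2-b)^3 - ((a+b)/2-b)^3)/3
      + ((t-d)^3 - ((b+d)/2-d)^3)/3)) {s..t}"
proof (rule has_integral_combine[of s "(b+d)/2"])
  show "s \<le> (b+d)/2" "(b+d)/2 \<le> t" using assms by auto
  show "((\<lambda>x. min ((x-a)^2) (min ((x-b)^2) ((x-d)^2))) has_integral
     ((((a+b)/2-a)^3 - (s-a)^3)/3 + (((b+d)/2-b)^3 - ((a+b)/2-b)^3)/3)) {s..(b+d)/2}"
  proof (rule has_integral_eq[OF _ two_pt[OF assms(1,3)]])
    fix x assume "x \<in> {s..(b+d)/2}"
    then have "(x-b)^2 \<le> (x-d)^2" using sq_le1[OF assms(2)] by auto
    then show "min ((x-a)^2) ((x-b)^2) = min ((x-a)^2) (min ((x-b)^2) ((x-d)^2))" by auto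
  next
    show "(a+b)/2 \<le> (b+d)/2" using assms by auto
  qed
  show "((\<lambda>x. min ((x-a)^2) (min ((x-b)^2) ((x-d)^2))) has_integral
     ((t-d)^3 - ((b+d)/2-d)^3)/3) {(b+d)/2..t}"
  proof (rule piece)
    show "(b+d)/2 \<le> t" by fact
    fix x assume "x \<in> {(b+d)/2..t}"
    then have "(x-d)^2 \<le> (x-b)^2" "(x-d)^2 \<le> (x-a)^2"
      using sq_le2[OF assms(2)] sq_le2[of a d x] assms by auto
    then show "min ((x-a)^2) (min ((x-b)^2) ((x-d)^2)) = (x-d)^2" by auto
  qed
qed

lemma tangent3:
  fixes t :: real
  shows "t^3 - (3*t/100 - 1/500) = (t-1/10)^2 * (t+1/5)"
  by (simp add: power2_eq_square power3_eq_cube algebra_simps)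

lemma poly2:
  fixes d1 d2 u :: real
  assumes "d1 > 0" "d2 > 0" "u > -d2" "2*d1+2*d2+u = 1/2"
  shows "2*d1^3+2*d2^3+u^3 \<ge> 1/200 \<and> (2*d1^3+2*d2^3+u^3 = 1/200 \<longrightarrow> d1 = 1/10 \<and> d2 = 1/10)"
proof (cases "u \<ge> -1/5")
  case True
  let ?T1 = "(d1-1/10)^2 * (d1+1/5)" and ?T2 = "(d2-1/10)^2 * (d2+1/5)" and ?T3 = "(u-1/10)^2 * (u+1/5)"
  have e: "2*d1^3+2*d2^3+u^3 - 1/200 = 2*?T1 + 2*?T2 + ?T3"
    using tangent3[of d1] tangent3[of d2] tangent3[of u] assms(4) by (simp add: algebra_simps)
  have n1: "?T1 \<ge> 0" "?T2 \<ge> 0" "?T3 \<ge> 0" using assms True by auto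
  have g: "2*d1^3+2*d2^3+u^3 \<ge> 1/200" using e n1 by linarith
  have h: "d1 = 1/10 \<and> d2 = 1/10" if "2*d1^3+2*d2^3+u^3 = 1/200"
  proof -
    have "?T1 = 0" "?T2 = 0" using that e n1 by linarith+
    then show ?thesis using assms by auto
  qed
  show ?thesis using g h by blast
next
  case False
  then have "d2 > 1/5" using assms by linarith
  have "d2^3 > (-u)^3" using assms False by (intro power_strict_mono) auto
  then have "u^3 + d2^3 > 0" by simp
  moreover have "d2^3 > (1/5)^3" using \<open>d2 > 1/5\<close> by (intro power_strict_mono) auto
  moreover have "d1^3 \<ge> 0" using assms by simp
  ultimately have "2*d1^3+2*d2^3+u^3 > 1/200" by (simp add: power3_eq_cube)
  then show ?thesis by auto
qed

lemma L0: "integral {0..1/4} (\<lambda>x::real. (x-1/4)^2) = 1/192"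
  using int_sq[of 0 "1/4::real" "1/4"] by (simp add: integral_unique power3_eq_cube)

lemma R0: "integral {1/2..1} (\<lambda>x::real. (x-1/2)^2) = 1/24"
  using int_sq[of "1/2" "1::real" "1/2"] by (simp add: integral_unique power3_eq_cube)

lemma M0: "integral {1/4..1/2} (\<lambda>x::real. min ((x-1/4)^2) ((x-1/2)^2)) = 1/768"
  using two_pt[of "1/4" "1/2::real" "1/4" "1/2"] by (simp add: integral_unique power3_eq_cube)

lemma L1:
  fixes a :: real
  assumes "a < 1/4"
  shows "integral {0..1/4} (\<lambda>x. min ((x-a)^2) ((x-1/4)^2)) \<ge> 1/1728 \<and>
    (integral {0..1/4} (\<lambda>x. min ((x-a)^2) ((x-1/4)^2)) = 1/1728 \<longrightarrow> a = 1/12)"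
proof (cases "a < -1/4")
  case True
  have "integral {0..1/4} (\<lambda>x. min ((x-a)^2) ((x-1/4)^2)) = integral {0..1/4} (\<lambda>x::real. (x-1/4)^2)"
  proof (rule integral_cong)
    fix x :: real assume "x \<in> {0..1/4}"
    then have "(x-1/4)^2 \<le> (x-a)^2" using True assms by (intro sq_le2) auto
    then show "min ((x-a)^2) ((x-1/4)^2) = (x-1/4)^2" by auto
  qed
  then show ?thesis using L0 by simp
next
  case False
  define v where "v = ((((a+1/4)/2-a)^3 - (0-a)^3)/3 + ((1/4-1/4)^3 - ((a+1/4)/2-1/4)^3)/3)"
  have Iv: "integral {0..1/4} (\<lambda>x. min ((x-a)^2) ((x-1/4)^2)) = v"
    unfolding v_def using False assms by (intro integral_unique two_pt) auto
  define X where "X = (a-1/12)^2*(5+12*a)/48"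
  have e: "v - 1/1728 = X"
    unfolding v_def X_def by (simp add: power2_eq_square power3_eq_cube field_simps)
  have pos: "5+12*a > 0" using False by linarith
  have X0: "X \<ge> 0" using pos unfolding X_def by simp
  have Xz: "a = 1/12" if "X = 0" using that pos unfolding X_def by simp
  show ?thesis
  proof (intro conjI impI)
    show "integral {0..1/4} (\<lambda>x. min ((x-a)^2) ((x-1/4)^2)) \<ge> 1/1728" using Iv e X0 by linarith
  next
    assume "integral {0..1/4} (\<lambda>x. min ((x-a)^2) ((x-1/4)^2)) = 1/1728"
    then have "X = 0" using Iv e by linarith
    then show "a = 1/12" by (rule Xz)
  qed
qed

lemma R1:
  fixes p :: real
  assumes "p > 1/2"
  shows "integral {1/2..1} (\<lambda>x. min ((x-1/2)^2) ((x-p)^2)) \<ge> 1/216"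
proof (cases "(1/2+p)/2 \<ge> 1")
  case True
  have "integral {1/2..1} (\<lambda>x. min ((x-1/2)^2) ((x-p)^2)) = integral {1/2..1} (\<lambda>x::real. (x-1/2)^2)"
  proof (rule integral_cong)
    fix x :: real assume "x \<in> {1/2..1}"
    then have "(x-1/2)^2 \<le> (x-p)^2" using True assms by (intro sq_le1) auto
    then show "min ((x-1/2)^2) ((x-p)^2) = (x-1/2)^2" by auto
  qed
  then show ?thesis using R0 by simp
next
  case False
  define v where "v = ((((1/2+p)/2-1/2)^3 - (1/2-1/2)^3)/3 + ((1-p)^3 - ((1/2+p)/2-p)^3)/3)"
  have Iv: "integral {1/2..1} (\<lambda>x. min ((x-1/2)^2) ((x-p)^2)) = v"
    unfolding v_def using False assms by (intro integral_unique two_pt) auto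
  define X where "X = (p-5/6)^2*(11/2-3*p)/12"
  have e: "v - 1/216 = X"
    unfolding v_def X_def by (simp add: power2_eq_square power3_eq_cube field_simps)
  have pos: "11/2-3*p > 0" using False by (simp add: field_simps)
  have X0: "X \<ge> 0" using pos unfolding X_def by simp
  show ?thesis using Iv e X0 by linarith
qed

lemma R2:
  fixes p q :: real
  assumes "1/2 < p" "p < q"
  shows "integral {1/2..1} (\<lambda>x. min ((x-1/2)^2) (min ((x-p)^2) ((x-q)^2))) \<ge> 1/600 \<and>
    (integral {1/2..1} (\<lambda>x. min ((x-1/2)^2) (min ((x-p)^2) ((x-q)^2))) = 1/600 \<longrightarrow> p = 7/10 \<and> q = 9/10)"
proof (cases "(p+q)/2 \<ge> 1")
  case True
  have "integral {1/2..1} (\<lambda>x. min ((x-1/2)^2) (min ((x-p)^2) ((x-q)^2))) = integral {1/2..1} (\<lambda>x. min ((x-1/2)^2) ((x-p)^2))"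
  proof (rule integral_cong)
    fix x :: real assume "x \<in> {1/2..1}"
    then have "(x-p)^2 \<le> (x-q)^2" using True assms by (intro sq_le1) auto
    then show "min ((x-1/2)^2) (min ((x-p)^2) ((x-q)^2)) = min ((x-1/2)^2) ((x-p)^2)" by auto
  qed
  then show ?thesis using R1[OF assms(1)] by simp
next
  case False
  define v where "v = ((((1/2+p)/2-1/2)^3 - (1/2-1/2)^3)/3 + (((p+q)/2-p)^3 - ((1/2+p)/2-p)^3)/3
      + ((1-q)^3 - ((p+q)/2-q)^3)/3)"
  have "integral {1/2..1} (\<lambda>x. min ((x-1/2)^2) (min ((x-p)^2) ((x-q)^2))) = v"
    unfolding v_def using False assms by (intro integral_unique three_pt) auto
  moreover have e: "v * 3 = 2*((p-1/2)/2)^3+2*((q-p)/2)^3+(1-q)^3"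
    unfolding v_def by (simp add: power2_eq_square power3_eq_cube field_simps)
  moreover have "2*((p-1/2)/2)^3+2*((q-p)/2)^3+(1-q)^3 \<ge> 1/200 \<and> (2*((p-1/2)/2)^3+2*((q-p)/2)^3+(1-q)^3 = 1/200 \<longrightarrow> (p-1/2)/2 = 1/10 \<and> (q-p)/2 = 1/10)"
    using False assms by (intro poly2) (auto simp: field_simps)
  ultimately show ?thesis by auto
qed

lemma fS_nonneg: "finite S \<Longrightarrow> S \<noteq> {} \<Longrightarrow> fS S x \<ge> 0"
  unfolding fS_def by (simp add: Min_ge_iff)

lemma fS_sub:
  assumes "finite S" "T \<subseteq> S" "T \<noteq> {}" "\<And>a. a \<in> S \<Longrightarrow> \<exists>b\<in>T. (x-b)^2 \<le> (x-a)^2"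
  shows "fS S x = fS T x"
proof (rule antisym)
  have fT: "finite T" using assms finite_subset by blast
  show "fS S x \<le> fS T x" unfolding fS_def
    using assms fT by (intro Min_antimono) auto
  have "S \<noteq> {}" using assms by auto
  then have "fS S x \<in> (\<lambda>a. (x-a)^2) ` S" unfolding fS_def using assms(1) by (intro Min_in) auto
  then obtain a where a: "a \<in> S" "fS S x = (x-a)^2" by auto
  then obtain b where b: "b \<in> T" "(x-b)^2 \<le> (x-a)^2" using assms(4) by blast
  have "fS T x \<le> (x-b)^2" unfolding fS_def using fT b by (intro Min_le) auto
  then show "fS T x \<le> fS S x" using a b by linarith
qed

lemma fS2: "fS {a,b} = (\<lambda>x. min ((x-a)^2) ((x-b)^2))"
  by (rule ext) (simp add: fS_def)

lemma fS3: "fS {a,b,c} = (\<lambda>x. min ((x-a)^2) (min ((x-b)^2) ((x-c)^2)))"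
  by (rule ext) (simp add: fS_def)

lemma fS1: "fS {a} = (\<lambda>x. (x-a)^2)"
  by (rule ext) (simp add: fS_def)

lemma decomp:
  fixes \<alpha> :: "real set"
  assumes "finite \<alpha>"
  defines "S \<equiv> \<alpha> \<union> {1/4, 1/2}"
  shows "integral {0..1} (fS S) = integral {0..1/4} (fS (insert (1/4) (\<alpha> \<inter> {..<1/4})))
     + integral {1/4..1/2} (fS ({1/4,1/2} \<union> (\<alpha> \<inter> {1/4<..<1/2})))
     + integral {1/2..1} (fS (insert (1/2) (\<alpha> \<inter> {1/2<..})))"
proof -
  have fin: "finite S" "S \<noteq> {}" using assms by auto
  have int: "fS S integrable_on {u..v}" for u v
    using cont_fS[OF fin] by (intro integrable_continuous_interval) (auto intro: continuous_on_subset)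
  have "integral {0..1} (fS S) = integral {0..1/2} (fS S) + integral {1/2..1} (fS S)"
    using int by (intro Henstock_Kurzweil_Integration.integral_combine[symmetric]) auto
  also have "integral {0..1/2} (fS S) = integral {0..1/4} (fS S) + integral {1/4..1/2} (fS S)"
    using int by (intro Henstock_Kurzweil_Integration.integral_combine[symmetric]) auto
  also have "integral {0..1/4} (fS S) = integral {0..1/4} (fS (insert (1/4) (\<alpha> \<inter> {..<1/4})))"
  proof (rule integral_cong, rule fS_sub[OF fin(1)])
    fix x a :: real assume x: "x \<in> {0..1/4}" and a: "a \<in> S"
    show "\<exists>b\<in>insert (1/4) (\<alpha> \<inter> {..<1/4}). (x-b)^2 \<le> (x-a)^2"
    proof (cases "a < 1/4")
      case True then show ?thesis using a unfolding S_def by auto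
    next
      case False then show ?thesis using x by (intro bexI[of _ "1/4"] sq_le1) auto
    qed
  qed (auto simp: S_def)
  also have "integral {1/4..1/2} (fS S) = integral {1/4..1/2} (fS ({1/4,1/2} \<union> (\<alpha> \<inter> {1/4<..<1/2})))"
  proof (rule integral_cong, rule fS_sub[OF fin(1)])
    fix x a :: real assume x: "x \<in> {1/4..1/2}" and a: "a \<in> S"
    show "\<exists>b\<in>{1/4,1/2} \<union> (\<alpha> \<inter> {1/4<..<1/2}). (x-b)^2 \<le> (x-a)^2"
    proof (cases "a < 1/4")
      case True then show ?thesis using x by (intro bexI[of _ "1/4"] sq_le2) auto
    next
      case False
      show ?thesis
      proof (cases "a > 1/2")
        case True then show ?thesis using x by (intro bexI[of _ "1/2"] sq_le1) auto
      next
        case False2: False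
        have "a \<in> {1/4,1/2} \<union> (\<alpha> \<inter> {1/4<..<1/2})"
          using a False False2 unfolding S_def by (auto simp: not_less le_less)
        then show ?thesis by (intro bexI[of _ a]) auto
      qed
    qed
  qed (auto simp: S_def)
  also have "integral {1/2..1} (fS S) = integral {1/2..1} (fS (insert (1/2) (\<alpha> \<inter> {1/2<..})))"
  proof (rule integral_cong, rule fS_sub[OF fin(1)])
    fix x a :: real assume x: "x \<in> {1/2..1}" and a: "a \<in> S"
    show "\<exists>b\<in>insert (1/2) (\<alpha> \<inter> {1/2<..}). (x-b)^2 \<le> (x-a)^2"
    proof (cases "a > 1/2")
      case True then show ?thesis using a unfolding S_def by auto
    next
      case False then show ?thesis using x by (intro bexI[of _ "1/2"] sq_le2) auto
    qed
  qed (auto simp: S_def)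
  finally show ?thesis .
qed

lemma int_nonneg: "finite S \<Longrightarrow> S \<noteq> {} \<Longrightarrow> integral {u..v} (fS S) \<ge> 0"
  apply (rule integral_nonneg)
   apply (rule integrable_continuous_interval)
   apply (rule continuous_on_subset[OF cont_fS]) apply auto[3]
  by (rule fS_nonneg) auto

lemma sing: "finite A \<Longrightarrow> card A \<le> 1 \<Longrightarrow> A \<noteq> {} \<Longrightarrow> \<exists>p. A = {p}"
proof -
  assume "finite A" "card A \<le> 1" "A \<noteq> {}"
  then have "card A = 1" by (metis One_nat_def card_0_eq le_SucE le_zero_eq)
  then show ?thesis by (simp add: card_1_singleton_iff)
qed

lemma gt_helper: "(x::real) > v \<Longrightarrow> x \<ge> v \<and> (x = v \<longrightarrow> P)" by auto

lemma LB:
  fixes \<alpha> :: "real set"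
  assumes fin: "finite \<alpha>" and card: "card \<alpha> \<le> 3"
  shows "integral {0..1} (fS (\<alpha> \<union> {1/4, 1/2})) \<ge> 613/172800 \<and>
    (integral {0..1} (fS (\<alpha> \<union> {1/4, 1/2})) = 613/172800 \<longrightarrow> \<alpha> \<union> {1/4, 1/2} = {1/12, 1/4, 1/2, 7/10, 9/10})"
proof -
  define AL where "AL = \<alpha> \<inter> {..<1/4}"
  define AM where "AM = \<alpha> \<inter> {1/4<..<1/2}"
  define AR where "AR = \<alpha> \<inter> {1/2<..}"
  define IL where "IL = integral {0..1/4} (fS (insert (1/4) AL))"
  define IM where "IM = integral {1/4..1/2} (fS ({1/4,1/2} \<union> AM))"
  define IR where "IR = integral {1/2..1} (fS (insert (1/2) AR))"
  have D: "integral {0..1} (fS (\<alpha> \<union> {1/4, 1/2})) = IL + IM + IR"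
    unfolding IL_def IM_def IR_def AL_def AM_def AR_def using decomp[OF fin] by simp
  have finA: "finite AL" "finite AM" "finite AR" using fin by (auto simp: AL_def AM_def AR_def)
  have c1: "card (AL \<union> AM) = card AL + card AM"
    by (rule card_Un_disjoint) (use finA in \<open>auto simp: AL_def AM_def\<close>)
  have "(AL \<union> AM) \<inter> AR = {}" unfolding AL_def AM_def AR_def by auto
  then have "card (AL \<union> AM \<union> AR) = card (AL \<union> AM) + card AR"
    using finA by (intro card_Un_disjoint) auto
  then have "card (AL \<union> AM \<union> AR) = card AL + card AM + card AR" using c1 by simp
  moreover have "card (AL \<union> AM \<union> AR) \<le> card \<alpha>"
    using fin by (intro card_mono) (auto simp: AL_def AM_def AR_def)
  ultimately have csum: "card AL + card AM + card AR \<le> 3" using card by linarith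
  have IL0: "IL \<ge> 0" "IM \<ge> 0" "IR \<ge> 0" unfolding IL_def IM_def IR_def
    using finA by (auto intro!: int_nonneg)
  have V: "(613::real)/172800 = 1/1728 + 1/768 + 1/600" by simp
  show ?thesis
  proof (cases "card AR \<le> 1")
    case True
    have "IR \<ge> 1/216"
    proof (cases "AR = {}")
      case True then show ?thesis using R0 by (simp add: IR_def fS1)
    next
      case False
      then obtain p where p: "AR = {p}" using sing[OF finA(3) \<open>card AR \<le> 1\<close>] by blast
      have "p \<in> AR" using p by simp
      then have "p > 1/2" unfolding AR_def by simp
      then show ?thesis using R1[of p] p by (simp add: IR_def fS2)
    qed
    then have "IL + IM + IR > 613/172800" using IL0 by linarith
    then show ?thesis unfolding D by (rule gt_helper)
  next
    case False
    then have cL: "card AL \<le> 1" using csum by linarith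
    show ?thesis
    proof (cases "AL = {}")
      case True
      then have "IL = 1/192" using L0 by (simp add: IL_def fS1)
      then have "IL + IM + IR > 613/172800" using IL0 by linarith
      then show ?thesis unfolding D by (rule gt_helper)
    next
      case False
      then obtain a where a: "AL = {a}" using sing[OF finA(1) cL] by blast
      then have "card AM = 0" "card AR = 2" using csum \<open>\<not> card AR \<le> 1\<close> by auto
      then have AM: "AM = {}" using finA by auto
      from \<open>card AR = 2\<close> obtain p0 q0 where "AR = {p0,q0}" "p0 \<noteq> q0"
        by (auto simp: card_2_iff)
      then obtain p q where pq: "AR = {p,q}" "p < q"
        by (metis insert_commute linorder_neqE_linordered_idom)
      have "a \<in> AL" using a by simp
      then have alt: "a < 1/4" unfolding AL_def by simp
      have "p \<in> AR" using pq by simp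
      then have pgt: "1/2 < p" unfolding AR_def by simp
      have "insert (1/4) AL = {a, 1/4}" using a by auto
      then have L: "IL \<ge> 1/1728 \<and> (IL = 1/1728 \<longrightarrow> a = 1/12)"
        unfolding IL_def using L1[OF alt] by (simp add: fS2)
      have M: "IM = 1/768" unfolding IM_def AM using M0 by (simp add: fS2)
      have R: "IR \<ge> 1/600 \<and> (IR = 1/600 \<longrightarrow> p = 7/10 \<and> q = 9/10)"
        unfolding IR_def pq fS3 using R2[OF pgt pq(2)] by simp
      show ?thesis
      proof (intro conjI impI)
        show "integral {0..1} (fS (\<alpha> \<union> {1/4, 1/2})) \<ge> 613/172800" using D L M R by linarith
      next
        assume "integral {0..1} (fS (\<alpha> \<union> {1/4, 1/2})) = 613/172800"
        then have "IL = 1/1728" "IR = 1/600" using D L M R by linarith+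
        then have "a = 1/12" "p = 7/10" "q = 9/10" using L R by auto
        then have e: "AL = {1/12}" "AR = {7/10, 9/10}" using a pq by auto
        show "\<alpha> \<union> {1/4, 1/2} = {1/12, 1/4, 1/2, 7/10, 9/10}"
        proof
          have "1/12 \<in> AL" "7/10 \<in> AR" "9/10 \<in> AR" using e by simp_all
          then have "1/12 \<in> \<alpha>" "7/10 \<in> \<alpha>" "9/10 \<in> \<alpha>" unfolding AL_def AR_def by simp_all
          then show "{1/12, 1/4, 1/2, 7/10, 9/10} \<subseteq> \<alpha> \<union> {1/4, 1/2}" by simp
        next
          show "\<alpha> \<union> {1/4, 1/2} \<subseteq> {1/12, 1/4, 1/2, 7/10, 9/10}"
          proof
            fix x assume x: "x \<in> \<alpha> \<union> {1/4, 1/2}"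
            consider "x < 1/4" | "x = 1/4" | "1/4 < x \<and> x < 1/2" | "x = 1/2" | "x > 1/2" by linarith
            then show "x \<in> {1/12, 1/4, 1/2, 7/10, 9/10}"
            proof cases
              case 1 then have "x \<in> AL" using x by (auto simp: AL_def)
              then show ?thesis using e by auto
            next
              case 3 then have "x \<in> AM" using x by (auto simp: AM_def)
              then show ?thesis using AM by auto
            next
              case 5 then have "x \<in> AR" using x by (auto simp: AR_def)
              then show ?thesis using e by auto
            qed auto
          qed
        qed
      qed
    qed
  qed
qed

lemma dist_eq: "finite S \<Longrightarrow> S \<noteq> {} \<Longrightarrow> distortion unif01 S = integral {0..1} (fS S)"
proof -
  assume a: "finite S" "S \<noteq> {}"
  have "distortion unif01 S = integral\<^sup>L unif01 (fS S)"
    by (simp add: distortion_def fS_def[abs_def])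
  also have "\<dots> = integral {0..1} (fS S)" by (rule dist_hk[OF cont_fS[OF a]])
  finally show ?thesis .
qed

lemma S0_val: "integral {0..1} (fS ({1/12, 7/10, 9/10} \<union> {1/4, 1/2})) = 613/172800"
proof -
  have a1: "{1/12, 7/10, 9/10::real} \<inter> {..<1/4} = {1/12}" by auto
  have a2: "{1/12, 7/10, 9/10::real} \<inter> {1/4<..<1/2} = {}" by auto
  have a3: "{1/12, 7/10, 9/10::real} \<inter> {1/2<..} = {7/10, 9/10}" by auto
  have i1: "integral {0..1/4} (fS {1/12, 1/4::real}) = 1/1728"
    unfolding fS2 by (rule integral_unique) (use two_pt[of "1/12" "1/4" 0 "1/4"] in \<open>simp add: power3_eq_cube\<close>)
  have i3: "integral {1/2..1} (fS {1/2, 7/10, 9/10::real}) = 1/600"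
    unfolding fS3 by (rule integral_unique) (use three_pt[of "1/2" "7/10" "9/10" "1/2" 1] in \<open>simp add: power3_eq_cube\<close>)
  have e1: "insert (1/4) {1/12} = {1/12, 1/4::real}" by auto
  show ?thesis
    unfolding decomp[OF finite.insertI[OF finite.insertI[OF finite.insertI[OF finite.emptyI]]]] a1 a2 a3
    using i1 i3 M0 by (simp add: e1 fS2)
qed

lemma vor1: "voronoi {1/12, 1/4, 1/2, 7/10, 9/10} (1/4) = {1/6..3/8::real}"
  unfolding voronoi_def by (auto simp: abs_if)

lemma vor2: "voronoi {1/12, 1/4, 1/2, 7/10, 9/10} (1/2) = {3/8..3/5::real}"
  unfolding voronoi_def by (auto simp: abs_if)

lemma meas_pos:
  assumes "0 \<le> u" "u < v" "v \<le> 1"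
  shows "measure unif01 {u..v} > 0"
proof -
  have "measure unif01 {u..v} = measure lborel ({0..1} \<inter> {u..v}) / measure lborel {0..1::real}"
    unfolding unif01_def by (rule measure_uniform_measure) auto
  also have "{0..1} \<inter> {u..v} = {u..v}" using assms by auto
  finally show ?thesis using assms by simp
qed

theorem proposition3p4:
  shows "is_cond_optimal unif01 {1/4, 1/2} 5 {1/12, 1/4, 1/2, 7/10, 9/10}
     \<and> (\<forall>S. is_cond_optimal unif01 {1/4, 1/2} 5 S \<longrightarrow> S = {1/12, 1/4, 1/2, 7/10, 9/10})
     \<and> cond_V unif01 {1/4, 1/2} 5 = 613/172800"
proof -
  have cb: "card {1/4, 1/2::real} = 2" by simp
  have S0eq: "{1/12, 1/4, 1/2, 7/10, 9/10::real} = {1/12, 7/10, 9/10} \<union> {1/4, 1/2}" by auto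
  have d0: "distortion unif01 {1/12, 1/4, 1/2, 7/10, 9/10} = 613/172800"
    unfolding S0eq by (subst dist_eq) (simp_all only: S0_val finite.insertI finite.emptyI finite_UnI, simp)
  have lb: "distortion unif01 (\<alpha> \<union> {1/4, 1/2}) \<ge> 613/172800 \<and>
      (distortion unif01 (\<alpha> \<union> {1/4, 1/2}) = 613/172800 \<longrightarrow> \<alpha> \<union> {1/4, 1/2} = {1/12, 1/4, 1/2, 7/10, 9/10})"
    if "finite \<alpha>" "card \<alpha> \<le> 3" for \<alpha> :: "real set"
    using LB[OF that] that by (subst dist_eq; simp)+
  have cV: "cond_V unif01 {1/4, 1/2} 5 = 613/172800"
    unfolding cond_V_def cb
  proof (rule cInf_eq_minimum)
    show "613/172800 \<in> (\<lambda>\<alpha>. distortion unif01 (\<alpha> \<union> {1/4, 1/2})) ` {\<alpha>. finite \<alpha> \<and> card \<alpha> \<le> 5 - 2}"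
      using d0 unfolding S0eq by (intro image_eqI[of _ _ "{1/12, 7/10, 9/10}"]) auto
  next
    fix x assume "x \<in> (\<lambda>\<alpha>. distortion unif01 (\<alpha> \<union> {1/4, 1/2::real})) ` {\<alpha>. finite \<alpha> \<and> card \<alpha> \<le> 5 - 2}"
    then show "613/172800 \<le> x" using lb by auto
  qed
  have opt: "is_cond_optimal unif01 {1/4, 1/2} 5 {1/12, 1/4, 1/2, 7/10, 9/10}"
    unfolding is_cond_optimal_def
  proof (intro conjI)
    show "\<exists>\<alpha>. finite \<alpha> \<and> card \<alpha> \<le> 5 - card {1/4, 1/2::real} \<and> {1/12, 1/4, 1/2, 7/10, 9/10::real} = \<alpha> \<union> {1/4, 1/2}"
      using S0eq by (intro exI[of _ "{1/12, 7/10, 9/10}"]) (auto simp add: cb)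
    show "distortion unif01 {1/12, 1/4, 1/2, 7/10, 9/10} = cond_V unif01 {1/4, 1/2} 5"
      using d0 cV by simp
    show "\<forall>b\<in>{1/4, 1/2}. 0 < measure unif01 (voronoi {1/12, 1/4, 1/2, 7/10, 9/10} b)"
      using meas_pos[of "1/6" "3/8"] meas_pos[of "3/8" "3/5"] by (simp add: vor1 vor2)
  qed (simp_all add: cb)
  have uniq: "S = {1/12, 1/4, 1/2, 7/10, 9/10}" if "is_cond_optimal unif01 {1/4, 1/2} 5 S" for S
  proof -
    from that obtain \<alpha> where a: "finite \<alpha>" "card \<alpha> \<le> 3" "S = \<alpha> \<union> {1/4, 1/2}"
      and d: "distortion unif01 S = cond_V unif01 {1/4, 1/2} 5"
      unfolding is_cond_optimal_def cb by auto
    show ?thesis using lb[OF a(1,2)] d cV a(3) by simp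
  qed
  show ?thesis using opt uniq cV by blast
qed

end
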